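(* Let $\rho=|\psi\rangle\langle\psi|$ be an $n$-qubit pure state and $S\subseteq[n]$ non-empty with $s=|S|$. Let $\{|\tilde\phi_j\rangle\langle\tilde\phi_j|\}_{j=1}^4$ be a single-qubit SIC-POVM, and for $\mathbf{q}\in\{1,2,3,4\}^s$ let $|\tilde\Phi_{\mathbf{q}}\rangle\langle\tilde\Phi_{\mathbf{q}}|=\bigotimes_{i\in S}|\tilde\phi_{q_i}\rangle\langle\tilde\phi_{q_i}|$ (identity on qubits outside $S$), so that measuring the local SIC-POVM on the qubits of $S$ yields outcome $\mathbf{q}$ with probability $P(\mathbf{q})=\operatorname{tr}(\rho|\tilde\Phi_{\mathbf{q}}\rangle\langle\tilde\Phi_{\mathbf{q}}|)$. Then $$\mathcal{C}_{|\psi\rangle}(S)=1-3^s\sum_{\mathbf{q}\in\{1,2,3,4\}^s}P(\mathbf{q})^2.$$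
   Context: $[n]=\{1,\dots,n\}$ labels the qubits. For an $n$-qubit pure state $|\psi\rangle$ and a non-empty $S\subseteq[n]$ with $s=|S|$, the concentratable entanglement is $\mathcal{C}_{|\psi\rangle}(S)=1-\frac{1}{2^s}\sum_{\alpha\subseteq S}\operatorname{tr}(\rho_\alpha^2)$, where $\rho_\alpha$ is the reduced state of $|\psi\rangle\langle\psi|$ on the qubits in $\alpha$, and $\operatorname{tr}(\rho_\emptyset^2):=1$. A single-qubit SIC-POVM consists of $|\tilde\phi_j\rangle=\frac{1}{\sqrt2}|\phi_j\rangle$, $j=1,\dots,4$, where $|\phi_j\rangle$ are unit vectors in $\mathbb{C}^2$ with $|\langle\phi_j|\phi_k\rangle|^2=1/3$ for $j\ne k$, so that $\sum_j|\tilde\phi_j\rangle\langle\tilde\phi_j|=\mathbb{I}$; e.g. $|\phi_1\rangle=|0\rangle$, $|\phi_{k}\rangle=\frac{1}{\sqrt3}|0\rangle+\sqrt{\frac23}e^{i2\pi(k-2)/3}|1\rangle$ for $k=2,3,4$. *)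

theory Defs
  imports "HOL-Analysis.Analysis" "HOL-Library.FuncSet"
begin

text \<open>A computational basis state of n qubits is
  encoded by the set x \<subseteq> {1..n} of qubits that are in state |1>; so qubit i of x
  is the bit (i \<in> x). A (pure) n-qubit state is psi :: nat set => complex, with
  amplitudes psi x for x \<in> Pow {1..n}. A single-qubit vector is a function bool => complex
  (False ~ |0>, True ~ |1>).\<close>

definition qubits :: "nat \<Rightarrow> nat set" where
  "qubits n = {1..n}"

definition normalized :: "nat \<Rightarrow> (nat set \<Rightarrow> complex) \<Rightarrow> bool" where
  "normalized n psi \<longleftrightarrow> (\<Sum>x\<in>Pow (qubits n). (cmod (psi x))\<^sup>2) = 1"

definition dens :: "(nat set \<Rightarrow> complex) \<Rightarrow> nat set \<Rightarrow> nat set \<Rightarrow> complex" where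
  "dens psi x y = psi x * cnj (psi y)"

text \<open>Reduced state on the qubits in alpha (partial trace over the complement); its
  entries are indexed by a, b \<subseteq> alpha.\<close>
definition reduced :: "nat \<Rightarrow> (nat set \<Rightarrow> complex) \<Rightarrow> nat set \<Rightarrow> nat set \<Rightarrow> nat set \<Rightarrow> complex" where
  "reduced n psi \<alpha> a b = (\<Sum>c\<in>Pow (qubits n - \<alpha>). dens psi (a \<union> c) (b \<union> c))"

definition purity :: "nat \<Rightarrow> (nat set \<Rightarrow> complex) \<Rightarrow> nat set \<Rightarrow> complex" where
  "purity n psi \<alpha> = (if \<alpha> = {} then 1 else
     (\<Sum>a\<in>Pow \<alpha>. \<Sum>b\<in>Pow \<alpha>. reduced n psi \<alpha> a b * reduced n psi \<alpha> b a))"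

definition conc_ent :: "nat \<Rightarrow> (nat set \<Rightarrow> complex) \<Rightarrow> nat set \<Rightarrow> complex" where
  "conc_ent n psi S = 1 - (1 / 2 ^ card S) * (\<Sum>\<alpha>\<in>Pow S. purity n psi \<alpha>)"

definition qubit_sic :: "(nat \<Rightarrow> bool \<Rightarrow> complex) \<Rightarrow> bool" where
  "qubit_sic \<phi> \<longleftrightarrow>
     (\<forall>j\<in>{1..4}. (\<Sum>b\<in>UNIV. (cmod (\<phi> j b))\<^sup>2) = 1) \<and>
     (\<forall>j\<in>{1..4}. \<forall>k\<in>{1..4}. j \<noteq> k \<longrightarrow>
        (cmod (\<Sum>b\<in>UNIV. cnj (\<phi> j b) * \<phi> k b))\<^sup>2 = 1/3)"

text \<open>Matrix entries of |Phi~_q><Phi~_q| = tensor over i in S of |phi~_{q i}><phi~_{q i}|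
  (with phi~ = phi / sqrt 2), tensored with the identity on qubits outside S.\<close>
definition sic_proj :: "(nat \<Rightarrow> bool \<Rightarrow> complex) \<Rightarrow> nat set \<Rightarrow> (nat \<Rightarrow> nat) \<Rightarrow> nat set \<Rightarrow> nat set \<Rightarrow> complex" where
  "sic_proj \<phi> S q x y =
     (\<Prod>i\<in>S. (\<phi> (q i) (i \<in> x) / sqrt 2) * cnj (\<phi> (q i) (i \<in> y) / sqrt 2)) *
     (if x - S = y - S then 1 else 0)"

definition sic_prob :: "nat \<Rightarrow> (nat set \<Rightarrow> complex) \<Rightarrow> (nat \<Rightarrow> bool \<Rightarrow> complex) \<Rightarrow> nat set \<Rightarrow> (nat \<Rightarrow> nat) \<Rightarrow> complex" where
  "sic_prob n psi \<phi> S q =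
     (\<Sum>x\<in>Pow (qubits n). \<Sum>y\<in>Pow (qubits n). dens psi x y * sic_proj \<phi> S q y x)"

end

theory Submission
  imports Defs
begin

lemma bloch_frame:
  fixes x1 x2 x3 x4 y1 y2 y3 y4 z1 z2 z3 z4 :: real
  assumes n1: "x1^2+y1^2+z1^2 = 1" and n2: "x2^2+y2^2+z2^2 = 1"
    and n3: "x3^2+y3^2+z3^2 = 1" and n4: "x4^2+y4^2+z4^2 = 1"
    and d12: "x1*x2+y1*y2+z1*z2 = -1/3" and d13: "x1*x3+y1*y3+z1*z3 = -1/3"
    and d14: "x1*x4+y1*y4+z1*z4 = -1/3" and d23: "x2*x3+y2*y3+z2*z3 = -1/3"
    and d24: "x2*x4+y2*y4+z2*z4 = -1/3" and d34: "x3*x4+y3*y4+z3*z4 = -1/3"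
  shows "x1+x2+x3+x4 = 0 \<and> y1+y2+y3+y4 = 0 \<and> z1+z2+z3+z4 = 0 \<and>
    x1^2+x2^2+x3^2+x4^2 = 4/3 \<and> y1^2+y2^2+y3^2+y4^2 = 4/3 \<and> z1^2+z2^2+z3^2+z4^2 = 4/3 \<and>
    x1*y1+x2*y2+x3*y3+x4*y4 = 0 \<and> x1*z1+x2*z2+x3*z3+x4*z4 = 0 \<and> y1*z1+y2*z2+y3*z3+y4*z4 = 0"
proof -
  define sx where "sx = x1+x2+x3+x4"
  define sy where "sy = y1+y2+y3+y4"
  define sz where "sz = z1+z2+z3+z4"
  have "sx^2+sy^2+sz^2 = (x1^2+y1^2+z1^2)+(x2^2+y2^2+z2^2)+(x3^2+y3^2+z3^2)+(x4^2+y4^2+z4^2)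
     + 2*((x1*x2+y1*y2+z1*z2)+(x1*x3+y1*y3+z1*z3)+(x1*x4+y1*y4+z1*z4)+(x2*x3+y2*y3+z2*z3)
       +(x2*x4+y2*y4+z2*z4)+(x3*x4+y3*y4+z3*z4))"
    unfolding sx_def sy_def sz_def by algebra
  also have "\<dots> = 0" using n1 n2 n3 n4 d12 d13 d14 d23 d24 d34 by simp
  finally have s0: "sx^2+sy^2+sz^2 = 0" .
  have sx0: "sx = 0" "sy = 0" "sz = 0"
    using s0 by (smt (verit) zero_le_power2 power_eq_0_iff)+
  define fxx where "fxx = x1^2+x2^2+x3^2+x4^2"
  define fyy where "fyy = y1^2+y2^2+y3^2+y4^2"
  define fzz where "fzz = z1^2+z2^2+z3^2+z4^2"
  define fxy where "fxy = x1*y1+x2*y2+x3*y3+x4*y4"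
  define fxz where "fxz = x1*z1+x2*z2+x3*z3+x4*z4"
  define fyz where "fyz = y1*z1+y2*z2+y3*z3+y4*z4"
  have tr: "fxx+fyy+fzz = 4" unfolding fxx_def fyy_def fzz_def using n1 n2 n3 n4 by linarith
  have "fxx^2+fyy^2+fzz^2+2*fxy^2+2*fxz^2+2*fyz^2 =
     (x1^2+y1^2+z1^2)^2+(x2^2+y2^2+z2^2)^2+(x3^2+y3^2+z3^2)^2+(x4^2+y4^2+z4^2)^2
     + 2*((x1*x2+y1*y2+z1*z2)^2+(x1*x3+y1*y3+z1*z3)^2+(x1*x4+y1*y4+z1*z4)^2+(x2*x3+y2*y3+z2*z3)^2
       +(x2*x4+y2*y4+z2*z4)^2+(x3*x4+y3*y4+z3*z4)^2)"
    unfolding fxx_def fyy_def fzz_def fxy_def fxz_def fyz_def by algebra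
  also have "\<dots> = 16/3" using n1 n2 n3 n4 d12 d13 d14 d23 d24 d34 by (simp add: power2_eq_square)
  finally have sq: "fxx^2+fyy^2+fzz^2+2*fxy^2+2*fxz^2+2*fyz^2 = 16/3" .
  have "(fxx-4/3)^2+(fyy-4/3)^2+(fzz-4/3)^2+2*fxy^2+2*fxz^2+2*fyz^2
      = (fxx^2+fyy^2+fzz^2+2*fxy^2+2*fxz^2+2*fyz^2) - 8/3*(fxx+fyy+fzz) + 16/3"
    by algebra
  also have "\<dots> = 0" using sq tr by simp
  finally have z: "(fxx-4/3)^2+(fyy-4/3)^2+(fzz-4/3)^2+2*fxy^2+2*fxz^2+2*fyz^2 = 0" .
  have "fxx = 4/3" "fyy = 4/3" "fzz = 4/3" "fxy = 0" "fxz = 0" "fyz = 0"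
    using z by (smt (verit) zero_le_power2 power_eq_0_iff)+
  then show ?thesis using sx0 unfolding sx_def sy_def sz_def fxx_def fyy_def fzz_def fxy_def fxz_def fyz_def
    by simp
qed


lemma overlap_bloch:
  fixes a1 b1 a2 b2 :: complex
  shows "(cmod (cnj a1 * a2 + cnj b1 * b2))^2 =
    ((cmod a1^2 + cmod b1^2) * (cmod a2^2 + cmod b2^2)
     + (2*Re (a1*cnj b1))*(2*Re (a2*cnj b2)) + (2*Im (a1*cnj b1))*(2*Im (a2*cnj b2))
     + (cmod a1^2 - cmod b1^2)*(cmod a2^2 - cmod b2^2)) / 2"
  unfolding cmod_power2 by (simp add: algebra_simps power2_eq_square)

lemma norm_bloch:
  fixes a b :: complex
  shows "(2*Re (a*cnj b))^2 + (2*Im (a*cnj b))^2 + (cmod a^2 - cmod b^2)^2 = (cmod a^2 + cmod b^2)^2"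
  unfolding cmod_power2 by (simp add: algebra_simps power2_eq_square)

lemma sic_cases:
  assumes F: "X 1 + X 2 + X 3 + X 4 = 0" "Y 1 + Y 2 + Y 3 + Y 4 = 0" "Z 1 + Z 2 + Z 3 + Z 4 = 0"
    "(X 1)^2 + (X 2)^2 + (X 3)^2 + (X 4)^2 = 4 / (3::real)"
    "(Y 1)^2 + (Y 2)^2 + (Y 3)^2 + (Y 4)^2 = 4 / (3::real)"
    "(Z 1)^2 + (Z 2)^2 + (Z 3)^2 + (Z 4)^2 = 4 / (3::real)"
    "X 1 * Y 1 + X 2 * Y 2 + X 3 * Y 3 + X 4 * Y 4 = 0"
    "X 1 * Z 1 + X 2 * Z 2 + X 3 * Z 3 + X 4 * Z 4 = 0"
    "Y 1 * Z 1 + Y 2 * Z 2 + Y 3 * Z 3 + Y 4 * Z 4 = 0"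
  shows "(\<Sum>j\<in>{1,2,3,4::nat}. (if a then (if b then Complex ((1 - Z j)/2) 0 else Complex (X j/2) (- Y j/2))
      else (if b then Complex (X j/2) (Y j/2) else Complex ((1 + Z j)/2) 0)) *
      (if c then (if d then Complex ((1 - Z j)/2) 0 else Complex (X j/2) (- Y j/2))
      else (if d then Complex (X j/2) (Y j/2) else Complex ((1 + Z j)/2) 0)))
   = 2/3 * ((if a = b \<and> c = d then 1 else 0) + (if a = d \<and> c = b then 1 else 0))"
  apply (cases a; cases b; cases c; cases d)
  apply (simp_all add: complex_eq_iff)
  using F apply (simp_all add: field_simps power2_eq_square)
  done

lemma sic_key:
  assumes "qubit_sic \<phi>"
  shows "(\<Sum>j\<in>{1..4}. \<phi> j a * cnj (\<phi> j b) * (\<phi> j c * cnj (\<phi> j d))) =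
     2/3 * ((if a = b \<and> c = d then 1 else 0) + (if a = d \<and> c = b then 1 else 0))"
proof -
  define X where "X j = 2*Re (\<phi> j False * cnj (\<phi> j True))" for j
  define Y where "Y j = 2*Im (\<phi> j False * cnj (\<phi> j True))" for j
  define Z where "Z j = cmod (\<phi> j False)^2 - cmod (\<phi> j True)^2" for j
  have nrm: "cmod (\<phi> j False)^2 + cmod (\<phi> j True)^2 = 1" if "j \<in> {1..4}" for j
    using assms that unfolding qubit_sic_def by (auto simp: UNIV_bool add.commute)
  have ov: "(cmod (cnj (\<phi> j False) * \<phi> k False + cnj (\<phi> j True) * \<phi> k True))^2 = 1/3"
    if "j \<in> {1..4}" "k \<in> {1..4}" "j \<noteq> k" for j k
    using assms that unfolding qubit_sic_def by (auto simp: UNIV_bool add.commute)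
  have N: "X j^2 + Y j^2 + Z j^2 = 1" if "j \<in> {1..4}" for j
    using norm_bloch[of "\<phi> j False" "\<phi> j True"] nrm[OF that] unfolding X_def Y_def Z_def by simp
  have D: "X j * X k + Y j * Y k + Z j * Z k = -1/3" if "j \<in> {1..4}" "k \<in> {1..4}" "j \<noteq> k" for j k
    using overlap_bloch[of "\<phi> j False" "\<phi> k False" "\<phi> j True" "\<phi> k True"] nrm[OF that(1)] nrm[OF that(2)]
      ov[OF that] unfolding X_def Y_def Z_def by (simp add: algebra_simps)
  have F: "X 1 + X 2 + X 3 + X 4 = 0" "Y 1 + Y 2 + Y 3 + Y 4 = 0" "Z 1 + Z 2 + Z 3 + Z 4 = 0"
    "(X 1)^2 + (X 2)^2 + (X 3)^2 + (X 4)^2 = 4 / 3"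
    "(Y 1)^2 + (Y 2)^2 + (Y 3)^2 + (Y 4)^2 = 4 / 3"
    "(Z 1)^2 + (Z 2)^2 + (Z 3)^2 + (Z 4)^2 = 4 / 3"
    "X 1 * Y 1 + X 2 * Y 2 + X 3 * Y 3 + X 4 * Y 4 = 0"
    "X 1 * Z 1 + X 2 * Z 2 + X 3 * Z 3 + X 4 * Z 4 = 0"
    "Y 1 * Z 1 + Y 2 * Z 2 + Y 3 * Z 3 + Y 4 * Z 4 = 0"
    using bloch_frame[OF N[of 1] N[of 2] N[of 3] N[of 4] D[of 1 2] D[of 1 3] D[of 1 4] D[of 2 3] D[of 2 4] D[of 3 4]]
    by simp_all
  have e00: "\<phi> j False * cnj (\<phi> j False) = Complex ((1 + Z j)/2) 0" if "j \<in> {1..4}" for j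
    using nrm[OF that] unfolding Z_def cmod_power2 by (simp add: complex_eq_iff power2_eq_square algebra_simps)
  have e11: "\<phi> j True * cnj (\<phi> j True) = Complex ((1 - Z j)/2) 0" if "j \<in> {1..4}" for j
    using nrm[OF that] unfolding Z_def cmod_power2 by (simp add: complex_eq_iff power2_eq_square algebra_simps)
  have e01: "\<phi> j False * cnj (\<phi> j True) = Complex (X j/2) (Y j/2)" for j
    unfolding X_def Y_def by (simp add: complex_eq_iff)
  have e10: "\<phi> j True * cnj (\<phi> j False) = Complex (X j/2) (- Y j/2)" for j
    unfolding X_def Y_def by (simp add: complex_eq_iff)
  have E: "\<phi> j a * cnj (\<phi> j b) = (if a then (if b then Complex ((1 - Z j)/2) 0 else Complex (X j/2) (- Y j/2))
      else (if b then Complex (X j/2) (Y j/2) else Complex ((1 + Z j)/2) 0))" if "j \<in> {1..4}" for j a b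
    using e00[OF that] e11[OF that] e01 e10 by (cases a; cases b) auto
  have U: "{1..4::nat} = {1,2,3,4}" by auto
  have "(\<Sum>j\<in>{1..4}. \<phi> j a * cnj (\<phi> j b) * (\<phi> j c * cnj (\<phi> j d))) =
     (\<Sum>j\<in>{1..4}. (if a then (if b then Complex ((1 - Z j)/2) 0 else Complex (X j/2) (- Y j/2))
      else (if b then Complex (X j/2) (Y j/2) else Complex ((1 + Z j)/2) 0)) *
      (if c then (if d then Complex ((1 - Z j)/2) 0 else Complex (X j/2) (- Y j/2))
      else (if d then Complex (X j/2) (Y j/2) else Complex ((1 + Z j)/2) 0)))"
    by (rule sum.cong) (simp_all add: E)
  also have "\<dots> = 2/3 * ((if a = b \<and> c = d then 1 else 0) + (if a = d \<and> c = b then 1 else 0))"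
    unfolding U by (rule sic_cases[OF F])
  finally show ?thesis .
qed


lemma sum_Pow_split:
  assumes "A \<inter> B = {}"
  shows "(\<Sum>x\<in>Pow (A \<union> B). g x) = (\<Sum>a\<in>Pow A. \<Sum>c\<in>Pow B. g (a \<union> c))"
proof -
  have bij: "bij_betw (\<lambda>(a,c). a \<union> c) (Pow A \<times> Pow B) (Pow (A \<union> B))"
    by (rule bij_betw_byWitness[where f' = "\<lambda>x. (x \<inter> A, x \<inter> B)"]) (use assms in auto)
  have "(\<Sum>a\<in>Pow A. \<Sum>c\<in>Pow B. g (a \<union> c)) = (\<Sum>p\<in>Pow A \<times> Pow B. g ((\<lambda>(a,c). a \<union> c) p))"
    by (simp add: sum.cartesian_product case_prod_unfold)
  also have "\<dots> = (\<Sum>x\<in>Pow (A \<union> B). g x)"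
    by (rule sum.reindex_bij_betw[OF bij])
  finally show ?thesis by simp
qed

definition Tsum :: "nat set \<Rightarrow> (nat set \<Rightarrow> complex) \<Rightarrow> nat set \<Rightarrow> complex" where
  "Tsum N psi \<alpha> = (\<Sum>x\<in>Pow N. \<Sum>x'\<in>Pow N.
     psi x * cnj (psi (x \<inter> (N - \<alpha>) \<union> x' \<inter> \<alpha>)) * (psi x' * cnj (psi (x' \<inter> (N - \<alpha>) \<union> x \<inter> \<alpha>))))"

lemma purity_expand:
  assumes "\<alpha> \<subseteq> qubits n"
  shows "(\<Sum>a\<in>Pow \<alpha>. \<Sum>b\<in>Pow \<alpha>. Defs.reduced n psi \<alpha> a b * Defs.reduced n psi \<alpha> b a) = Tsum (qubits n) psi \<alpha>"
proof -
  define N where "N = qubits n"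
  define \<beta> where "\<beta> = N - \<alpha>"
  have NU: "N = \<alpha> \<union> \<beta>" and dj: "\<alpha> \<inter> \<beta> = {}" using assms unfolding N_def \<beta>_def by auto
  define F where "F x x' = psi x * cnj (psi (x \<inter> \<beta> \<union> x' \<inter> \<alpha>)) * (psi x' * cnj (psi (x' \<inter> \<beta> \<union> x \<inter> \<alpha>)))" for x x'
  have "Tsum N psi \<alpha> = (\<Sum>x\<in>Pow (\<alpha> \<union> \<beta>). \<Sum>x'\<in>Pow (\<alpha> \<union> \<beta>). F x x')"
    unfolding Tsum_def F_def \<beta>_def[symmetric] NU[symmetric] ..
  also have "\<dots> = (\<Sum>a\<in>Pow \<alpha>. \<Sum>c\<in>Pow \<beta>. \<Sum>b\<in>Pow \<alpha>. \<Sum>c'\<in>Pow \<beta>. F (a \<union> c) (b \<union> c'))"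
    by (simp add: sum_Pow_split[OF dj])
  also have "\<dots> = (\<Sum>a\<in>Pow \<alpha>. \<Sum>b\<in>Pow \<alpha>. \<Sum>c\<in>Pow \<beta>. \<Sum>c'\<in>Pow \<beta>. F (a \<union> c) (b \<union> c'))"
    by (rule sum.cong[OF refl], rule sum.swap)
  also have "\<dots> = (\<Sum>a\<in>Pow \<alpha>. \<Sum>b\<in>Pow \<alpha>. Defs.reduced n psi \<alpha> a b * Defs.reduced n psi \<alpha> b a)"
  proof (intro sum.cong refl)
    fix a b assume a: "a \<in> Pow \<alpha>" and b: "b \<in> Pow \<alpha>"
    have "Defs.reduced n psi \<alpha> a b * Defs.reduced n psi \<alpha> b a =
      (\<Sum>c\<in>Pow \<beta>. \<Sum>c'\<in>Pow \<beta>. dens psi (a \<union> c) (b \<union> c) * dens psi (b \<union> c') (a \<union> c'))"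
      unfolding Defs.reduced_def N_def[symmetric] \<beta>_def[symmetric] by (rule sum_product)
    also have "\<dots> = (\<Sum>c\<in>Pow \<beta>. \<Sum>c'\<in>Pow \<beta>. F (a \<union> c) (b \<union> c'))"
    proof (intro sum.cong refl)
      fix c c' assume c: "c \<in> Pow \<beta>" and c': "c' \<in> Pow \<beta>"
      have 1: "(a \<union> c) \<inter> \<beta> \<union> (b \<union> c') \<inter> \<alpha> = b \<union> c" using a b c c' dj by auto
      have 2: "(b \<union> c') \<inter> \<beta> \<union> (a \<union> c) \<inter> \<alpha> = a \<union> c'" using a b c c' dj by auto
      show "dens psi (a \<union> c) (b \<union> c) * dens psi (b \<union> c') (a \<union> c') = F (a \<union> c) (b \<union> c')"
        unfolding F_def 1 2 dens_def by simp
    qed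
    finally show "(\<Sum>c\<in>Pow \<beta>. \<Sum>c'\<in>Pow \<beta>. F (a \<union> c) (b \<union> c')) = Defs.reduced n psi \<alpha> a b * Defs.reduced n psi \<alpha> b a" by simp
  qed
  finally show ?thesis unfolding N_def by simp
qed

lemma prod_ind:
  assumes "finite A"
  shows "(\<Prod>i\<in>A. (if P i then 1 else 0 :: complex)) = (if \<forall>i\<in>A. P i then 1 else 0)"
  using assms by (induction A rule: finite_induct) auto

lemma sum_swap5:
  "(\<Sum>q\<in>Q. \<Sum>x\<in>P1. \<Sum>x'\<in>P2. \<Sum>y\<in>P3. \<Sum>y'\<in>P4. f q x x' y y') =
   (\<Sum>x\<in>P1. \<Sum>x'\<in>P2. \<Sum>y\<in>P3. \<Sum>y'\<in>P4. \<Sum>q\<in>Q. f q x x' y y')"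
  apply (rule trans[OF sum.swap], rule sum.cong[OF refl])+
  apply (rule refl)
  done


lemma half_sq: "(z / complex_of_real (sqrt 2)) * cnj (w / complex_of_real (sqrt 2)) = z * cnj w / 2"
proof -
  have "complex_of_real (sqrt 2) * complex_of_real (sqrt 2) = 2"
    by (simp flip: of_real_mult)
  then show ?thesis by (simp add: field_simps)
qed

lemma prod_half: "(\<Prod>i\<in>S. a i / 2) * (\<Prod>i\<in>S. b i / 2) = (\<Prod>i\<in>S. a i * b i / (4::complex))"
  unfolding prod.distrib[symmetric] by (rule prod.cong) (simp_all add: field_simps)

lemma spsum:
  assumes "qubit_sic \<phi>" and fin: "finite S"
  shows "(\<Sum>q\<in>PiE S (\<lambda>_. {1..4}). sic_proj \<phi> S q y x * sic_proj \<phi> S q y' x') =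
    (1/6) ^ card S * (\<Sum>\<alpha>\<in>Pow S. (if y - S = x - S then 1 else 0) * (if y' - S = x' - S then 1 else 0) *
      ((\<Prod>i\<in>\<alpha>. if (i \<in> y \<longleftrightarrow> i \<in> x') \<and> (i \<in> y' \<longleftrightarrow> i \<in> x) then 1 else 0) *
       (\<Prod>i\<in>S - \<alpha>. if (i \<in> y \<longleftrightarrow> i \<in> x) \<and> (i \<in> y' \<longleftrightarrow> i \<in> x') then 1 else 0)))"
proof -
  define I :: complex where "I = (if y - S = x - S then 1 else 0) * (if y' - S = x' - S then 1 else 0)"
  define f where "f i j = \<phi> j (i \<in> y) * cnj (\<phi> j (i \<in> x)) * (\<phi> j (i \<in> y') * cnj (\<phi> j (i \<in> x'))) / 4" for i j
  define E :: "nat \<Rightarrow> complex" where "E i = (if (i \<in> y \<longleftrightarrow> i \<in> x') \<and> (i \<in> y' \<longleftrightarrow> i \<in> x) then 1 else 0)" for i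
  define D :: "nat \<Rightarrow> complex" where "D i = (if (i \<in> y \<longleftrightarrow> i \<in> x) \<and> (i \<in> y' \<longleftrightarrow> i \<in> x') then 1 else 0)" for i
  have "(\<Sum>q\<in>PiE S (\<lambda>_. {1..4}). sic_proj \<phi> S q y x * sic_proj \<phi> S q y' x') =
        (\<Sum>q\<in>PiE S (\<lambda>_. {1..4}). I * (\<Prod>i\<in>S. f i (q i)))"
  proof (rule sum.cong[OF refl])
    fix q
    show "sic_proj \<phi> S q y x * sic_proj \<phi> S q y' x' = I * (\<Prod>i\<in>S. f i (q i))"
      unfolding sic_proj_def I_def f_def half_sq
      by (simp add: prod_half)
  qed
  also have "\<dots> = I * (\<Prod>i\<in>S. \<Sum>j\<in>{1..4}. f i j)"
    by (simp add: sum_distrib_left prod_sum_PiE[OF fin])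
  also have "(\<Prod>i\<in>S. \<Sum>j\<in>{1..4}. f i j) = (\<Prod>i\<in>S. (1/6) * (E i + D i))"
  proof (rule prod.cong[OF refl])
    fix i
    have "(\<Sum>j\<in>{1..4}. f i j) = (\<Sum>j\<in>{1..4}. \<phi> j (i \<in> y) * cnj (\<phi> j (i \<in> x)) * (\<phi> j (i \<in> y') * cnj (\<phi> j (i \<in> x')))) / 4"
      unfolding f_def by (simp add: sum_divide_distrib)
    also have "\<dots> = (1/6) * (E i + D i)"
      unfolding sic_key[OF assms(1)] E_def D_def by auto
    finally show "(\<Sum>j\<in>{1..4}. f i j) = (1/6) * (E i + D i)" .
  qed
  also have "\<dots> = (1/6) ^ card S * (\<Sum>\<alpha>\<in>Pow S. (\<Prod>i\<in>\<alpha>. E i) * (\<Prod>i\<in>S - \<alpha>. D i))"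
    by (simp only: prod.distrib prod_constant prod_add[OF fin])
  finally show ?thesis
    unfolding I_def E_def D_def by (simp add: sum_distrib_left mult_ac)
qed


lemma ind_collapse:
  assumes "x \<subseteq> N" "y \<subseteq> N" "x' \<subseteq> N" "y' \<subseteq> N" "\<alpha> \<subseteq> S" "S \<subseteq> N" "finite S"
  shows "(if y - S = x - S then 1 else 0) * (if y' - S = x' - S then 1 else 0) *
      ((\<Prod>i\<in>\<alpha>. if (i \<in> y \<longleftrightarrow> i \<in> x') \<and> (i \<in> y' \<longleftrightarrow> i \<in> x) then 1 else 0) *
       (\<Prod>i\<in>S - \<alpha>. if (i \<in> y \<longleftrightarrow> i \<in> x) \<and> (i \<in> y' \<longleftrightarrow> i \<in> x') then 1 else 0))
    = (if y = x \<inter> (N - \<alpha>) \<union> x' \<inter> \<alpha> \<and> y' = x' \<inter> (N - \<alpha>) \<union> x \<inter> \<alpha> then 1 else (0::complex))"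
proof -
  have fa: "finite \<alpha>" using assms(5,7) finite_subset by blast
  have fs: "finite (S - \<alpha>)" using assms(7) by simp
  have iff: "(y - S = x - S \<and> y' - S = x' - S \<and>
      (\<forall>i\<in>\<alpha>. (i \<in> y \<longleftrightarrow> i \<in> x') \<and> (i \<in> y' \<longleftrightarrow> i \<in> x)) \<and>
      (\<forall>i\<in>S - \<alpha>. (i \<in> y \<longleftrightarrow> i \<in> x) \<and> (i \<in> y' \<longleftrightarrow> i \<in> x'))) \<longleftrightarrow>
      (y = x \<inter> (N - \<alpha>) \<union> x' \<inter> \<alpha> \<and> y' = x' \<inter> (N - \<alpha>) \<union> x \<inter> \<alpha>)"
  proof
    assume L: "y - S = x - S \<and> y' - S = x' - S \<and>
      (\<forall>i\<in>\<alpha>. (i \<in> y \<longleftrightarrow> i \<in> x') \<and> (i \<in> y' \<longleftrightarrow> i \<in> x)) \<and>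
      (\<forall>i\<in>S - \<alpha>. (i \<in> y \<longleftrightarrow> i \<in> x) \<and> (i \<in> y' \<longleftrightarrow> i \<in> x'))"
    have A: "i \<in> y \<longleftrightarrow> i \<in> x \<inter> (N - \<alpha>) \<union> x' \<inter> \<alpha>" for i
    proof (cases "i \<in> \<alpha>")
      case True then show ?thesis using L by blast
    next
      case F: False
      show ?thesis
      proof (cases "i \<in> S")
        case True then show ?thesis using L F assms(1,2) by blast
      next
        case False
        then have "i \<in> y \<longleftrightarrow> i \<in> x" using L by blast
        then show ?thesis using F assms(1,2) by blast
      qed
    qed
    have B: "i \<in> y' \<longleftrightarrow> i \<in> x' \<inter> (N - \<alpha>) \<union> x \<inter> \<alpha>" for i
    proof (cases "i \<in> \<alpha>")
      case True then show ?thesis using L by blast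
    next
      case F: False
      show ?thesis
      proof (cases "i \<in> S")
        case True then show ?thesis using L F assms(3,4) by blast
      next
        case False
        then have "i \<in> y' \<longleftrightarrow> i \<in> x'" using L by blast
        then show ?thesis using F assms(3,4) by blast
      qed
    qed
    show "y = x \<inter> (N - \<alpha>) \<union> x' \<inter> \<alpha> \<and> y' = x' \<inter> (N - \<alpha>) \<union> x \<inter> \<alpha>"
      using A B by blast
  next
    assume R: "y = x \<inter> (N - \<alpha>) \<union> x' \<inter> \<alpha> \<and> y' = x' \<inter> (N - \<alpha>) \<union> x \<inter> \<alpha>"
    then have y: "y = x \<inter> (N - \<alpha>) \<union> x' \<inter> \<alpha>" and y': "y' = x' \<inter> (N - \<alpha>) \<union> x \<inter> \<alpha>" by auto
    have "y - S = x - S" unfolding y using assms(1,5) by blast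
    moreover have "y' - S = x' - S" unfolding y' using assms(3,5) by blast
    moreover have "\<forall>i\<in>\<alpha>. (i \<in> y \<longleftrightarrow> i \<in> x') \<and> (i \<in> y' \<longleftrightarrow> i \<in> x)" unfolding y y' by blast
    moreover have "\<forall>i\<in>S - \<alpha>. (i \<in> y \<longleftrightarrow> i \<in> x) \<and> (i \<in> y' \<longleftrightarrow> i \<in> x')"
      unfolding y y' using assms(1,3,6) by blast
    ultimately show "y - S = x - S \<and> y' - S = x' - S \<and>
      (\<forall>i\<in>\<alpha>. (i \<in> y \<longleftrightarrow> i \<in> x') \<and> (i \<in> y' \<longleftrightarrow> i \<in> x)) \<and>
      (\<forall>i\<in>S - \<alpha>. (i \<in> y \<longleftrightarrow> i \<in> x) \<and> (i \<in> y' \<longleftrightarrow> i \<in> x'))" by blast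
  qed
  show ?thesis
    unfolding prod_ind[OF fa] prod_ind[OF fs] iff[symmetric] by auto
qed


lemma delta2:
  assumes "t \<in> P" "u \<in> P" "finite P"
  shows "(\<Sum>y\<in>P. \<Sum>y'\<in>P. (if y = t \<and> y' = u then g y y' else 0)) = (g t u :: complex)"
proof -
  have "(\<Sum>y\<in>P. \<Sum>y'\<in>P. (if y = t \<and> y' = u then g y y' else 0)) =
        (\<Sum>y\<in>P. if y = t then (\<Sum>y'\<in>P. if y' = u then g y y' else 0) else 0)"
    by (rule sum.cong) auto
  also have "\<dots> = g t u" using assms by (simp add: sum.delta')
  finally show ?thesis .
qed

theorem corollary1:
  fixes n :: nat and psi :: "nat set \<Rightarrow> complex" and S :: "nat set"
    and \<phi> :: "nat \<Rightarrow> bool \<Rightarrow> complex"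
  assumes "normalized n psi"
    and "S \<subseteq> qubits n" and "S \<noteq> {}"
    and "qubit_sic \<phi>"
  shows "conc_ent n psi S =
           1 - 3 ^ card S * (\<Sum>q\<in>PiE S (\<lambda>_. {1..4}). (sic_prob n psi \<phi> S q)\<^sup>2)"
proof -
  define N where "N = qubits n"
  have finN: "finite N" unfolding N_def qubits_def by simp
  have finS: "finite S" using assms(2) finN finite_subset unfolding N_def by blast
  have SN: "S \<subseteq> N" using assms(2) unfolding N_def .
  define G where "G x x' y y' = psi x * cnj (psi y) * (psi x' * cnj (psi y'))" for x x' y y'
  define sp where "sp q y x = sic_proj \<phi> S q y x" for q y x
  define Q where "Q = PiE S (\<lambda>_. {1..4::nat})"
  define Y where "Y x x' \<alpha> = x \<inter> (N - \<alpha>) \<union> x' \<inter> \<alpha>" for x x' \<alpha>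
  have step1: "(sic_prob n psi \<phi> S q)\<^sup>2 = (\<Sum>x\<in>Pow N. \<Sum>x'\<in>Pow N. \<Sum>y\<in>Pow N. \<Sum>y'\<in>Pow N.
      G x x' y y' * (sp q y x * sp q y' x'))" for q
    unfolding sic_prob_def power2_eq_square sum_product N_def[symmetric] G_def sp_def dens_def
    by (simp add: mult_ac)
  have "(\<Sum>q\<in>Q. (sic_prob n psi \<phi> S q)\<^sup>2) = (\<Sum>q\<in>Q. \<Sum>x\<in>Pow N. \<Sum>x'\<in>Pow N. \<Sum>y\<in>Pow N. \<Sum>y'\<in>Pow N.
      G x x' y y' * (sp q y x * sp q y' x'))"
    by (simp add: step1)
  also have "\<dots> = (\<Sum>x\<in>Pow N. \<Sum>x'\<in>Pow N. \<Sum>y\<in>Pow N. \<Sum>y'\<in>Pow N. \<Sum>q\<in>Q.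
      G x x' y y' * (sp q y x * sp q y' x'))"
    by (rule sum_swap5)
  also have "\<dots> = (\<Sum>x\<in>Pow N. \<Sum>x'\<in>Pow N. \<Sum>y\<in>Pow N. \<Sum>y'\<in>Pow N. \<Sum>\<alpha>\<in>Pow S.
      (1/6) ^ card S * (if y = Y x x' \<alpha> \<and> y' = Y x' x \<alpha> then G x x' y y' else 0))"
  proof (intro sum.cong refl)
    fix x x' y y' assume xs: "x \<in> Pow N" "x' \<in> Pow N" "y \<in> Pow N" "y' \<in> Pow N"
    have "(\<Sum>q\<in>Q. G x x' y y' * (sp q y x * sp q y' x')) = G x x' y y' * (\<Sum>q\<in>Q. sp q y x * sp q y' x')"
      by (simp add: sum_distrib_left)
    also have "\<dots> = G x x' y y' * ((1/6) ^ card S * (\<Sum>\<alpha>\<in>Pow S.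
        (if y = Y x x' \<alpha> \<and> y' = Y x' x \<alpha> then 1 else 0)))"
      unfolding Q_def sp_def spsum[OF assms(4) finS] Y_def
      using ind_collapse[of x N y x' y' _ S] xs SN finS
      by (intro arg_cong[where f = "\<lambda>z. G x x' y y' * ((1/6) ^ card S * z)"] sum.cong refl) auto
    also have "\<dots> = (\<Sum>\<alpha>\<in>Pow S. (1/6) ^ card S * (if y = Y x x' \<alpha> \<and> y' = Y x' x \<alpha> then G x x' y y' else 0))"
      unfolding sum_distrib_left by (intro sum.cong refl) auto
    finally show "(\<Sum>q\<in>Q. G x x' y y' * (sp q y x * sp q y' x')) = \<dots>" .
  qed
  also have "\<dots> = (\<Sum>\<alpha>\<in>Pow S. \<Sum>x\<in>Pow N. \<Sum>x'\<in>Pow N. \<Sum>y\<in>Pow N. \<Sum>y'\<in>Pow N.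
      (1/6) ^ card S * (if y = Y x x' \<alpha> \<and> y' = Y x' x \<alpha> then G x x' y y' else 0))"
    by (rule sum_swap5[symmetric])
  also have "\<dots> = (\<Sum>\<alpha>\<in>Pow S. (1/6) ^ card S * Tsum N psi \<alpha>)"
  proof (intro sum.cong refl)
    fix \<alpha> assume "\<alpha> \<in> Pow S"
    have "(\<Sum>x\<in>Pow N. \<Sum>x'\<in>Pow N. \<Sum>y\<in>Pow N. \<Sum>y'\<in>Pow N.
      (1/6) ^ card S * (if y = Y x x' \<alpha> \<and> y' = Y x' x \<alpha> then G x x' y y' else 0)) =
      (1/6) ^ card S * (\<Sum>x\<in>Pow N. \<Sum>x'\<in>Pow N. \<Sum>y\<in>Pow N. \<Sum>y'\<in>Pow N.
       (if y = Y x x' \<alpha> \<and> y' = Y x' x \<alpha> then G x x' y y' else 0))"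
      by (simp add: sum_distrib_left)
    also have "(\<Sum>x\<in>Pow N. \<Sum>x'\<in>Pow N. \<Sum>y\<in>Pow N. \<Sum>y'\<in>Pow N.
       (if y = Y x x' \<alpha> \<and> y' = Y x' x \<alpha> then G x x' y y' else 0)) = Tsum N psi \<alpha>"
      unfolding Tsum_def
    proof (intro sum.cong refl)
      fix x x' assume "x \<in> Pow N" "x' \<in> Pow N"
      then have "Y x x' \<alpha> \<in> Pow N" "Y x' x \<alpha> \<in> Pow N" unfolding Y_def by auto
      then show "(\<Sum>y\<in>Pow N. \<Sum>y'\<in>Pow N. (if y = Y x x' \<alpha> \<and> y' = Y x' x \<alpha> then G x x' y y' else 0)) =
        psi x * cnj (psi (x \<inter> (N - \<alpha>) \<union> x' \<inter> \<alpha>)) * (psi x' * cnj (psi (x' \<inter> (N - \<alpha>) \<union> x \<inter> \<alpha>)))"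
        using finN by (simp add: delta2 G_def Y_def)
    qed
    finally show "(\<Sum>x\<in>Pow N. \<Sum>x'\<in>Pow N. \<Sum>y\<in>Pow N. \<Sum>y'\<in>Pow N.
      (1/6) ^ card S * (if y = Y x x' \<alpha> \<and> y' = Y x' x \<alpha> then G x x' y y' else 0)) =
      (1/6) ^ card S * Tsum N psi \<alpha>" .
  qed
  finally have SQ: "(\<Sum>q\<in>Q. (sic_prob n psi \<phi> S q)\<^sup>2) = (1/6) ^ card S * (\<Sum>\<alpha>\<in>Pow S. Tsum N psi \<alpha>)"
    by (simp add: sum_distrib_left)
  have PT: "purity n psi \<alpha> = Tsum N psi \<alpha>" if "\<alpha> \<in> Pow S" for \<alpha>
  proof (cases "\<alpha> = {}")
    case True
    have nr: "(\<Sum>x\<in>Pow N. psi x * cnj (psi x)) = 1"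
    proof -
      have "(\<Sum>x\<in>Pow N. psi x * cnj (psi x)) = of_real (\<Sum>x\<in>Pow N. (cmod (psi x))\<^sup>2)"
        by (simp only: complex_norm_square of_real_sum)
      then show ?thesis using assms(1) unfolding normalized_def N_def by simp
    qed
    have "Tsum N psi {} = (\<Sum>x\<in>Pow N. \<Sum>x'\<in>Pow N. psi x * cnj (psi x) * (psi x' * cnj (psi x')))"
      unfolding Tsum_def by (intro sum.cong refl) (auto simp: Int_absorb2)
    also have "\<dots> = (\<Sum>x\<in>Pow N. psi x * cnj (psi x)) * (\<Sum>x\<in>Pow N. psi x * cnj (psi x))"
      by (simp add: sum_product)
    also have "\<dots> = 1" using nr by simp
    finally show ?thesis using True unfolding purity_def by simp
  next
    case False
    have "\<alpha> \<subseteq> qubits n" using that SN unfolding N_def by auto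
    then show ?thesis using False purity_expand unfolding purity_def N_def by simp
  qed
  have c: "(3::complex) ^ card S * (1/6) ^ card S = 1 / 2 ^ card S"
  proof -
    have "(3::complex) ^ card S * (1/6) ^ card S = (3 * (1/6)) ^ card S" by (simp only: power_mult_distrib)
    also have "(3 * (1/6) :: complex) = 1/2" by simp
    finally show ?thesis by (simp only: power_one_over)
  qed
  show ?thesis
    unfolding conc_ent_def Q_def[symmetric] SQ
    using sum.cong[OF refl PT, of "Pow S"] by (simp add: mult.assoc[symmetric] c)
qed

end
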